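(* Let $\Sigma\in\mathsf{c}\text{-}\mathsf{Fan}^{+-}_{\rm sc}(2)$ have $n$ two-dimensional cones and quiddity sequence $\mathrm{s}(\Sigma)=(a_1,\dots,a_{n-2};0,0)$. If $n\ge5$, then there exists $2\le i\le n-3$ with $a_i=1$.
   Context: $\mathsf{c}\text{-}\mathsf{Fan}^{+-}_{\rm sc}(2)$: complete nonsingular fans in $\mathbb{R}^2$ (each 2-dimensional cone generated by a $\mathbb{Z}$-basis) containing $\operatorname{cone}\{(1,0),(0,1)\}$, $\operatorname{cone}\{(-1,0),(0,-1)\}$ and $\operatorname{cone}\{(-1,0),(0,1)\}$, with every cone in a closed coordinate quadrant and every ray in exactly two 2-dimensional cones. Its primitive ray generators in clockwise order are $v_1=(1,0),v_2,\dots,v_{n-2}=(0,-1),v_{n-1}=(-1,0),v_n=(0,1)$, and the integers $a_j$ are defined by $a_jv_j=v_{j-1}+v_{j+1}$ (indices mod $n$). *)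

theory Defs
  imports Main
begin

definition det2 :: "int \<times> int \<Rightarrow> int \<times> int \<Rightarrow> int" where
  "det2 u w = fst u * snd w - snd u * fst w"

definition cyc_prev :: "nat \<Rightarrow> nat \<Rightarrow> nat" where
  "cyc_prev n j = (if j = 1 then n else j - 1)"
definition cyc_next :: "nat \<Rightarrow> nat \<Rightarrow> nat" where
  "cyc_next n j = (if j = n then 1 else j + 1)"

text \<open>The primitive ray generators v 1, ..., v n (listed clockwise) of a fan in
  c-Fan^{+-}_sc(2) with n two-dimensional cones: the 2-cones are cone(v j, v (j+1))
  (indices mod n), each generated by a Z-basis oriented clockwise (det = -1);
  v 1 = (1,0), v (n-2) = (0,-1), v (n-1) = (-1,0), v n = (0,1); every cone lies in a
  closed coordinate quadrant, so v 2, ..., v (n-3) lie in the closed fourth quadrant.\<close>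
definition cfan_sc_rays :: "nat \<Rightarrow> (nat \<Rightarrow> int \<times> int) \<Rightarrow> bool" where
  "cfan_sc_rays n v \<longleftrightarrow>
     4 \<le> n \<and>
     v 1 = (1, 0) \<and> v (n - 2) = (0, -1) \<and> v (n - 1) = (-1, 0) \<and> v n = (0, 1) \<and>
     (\<forall>j \<in> {1..n}. det2 (v j) (v (cyc_next n j)) = -1) \<and>
     (\<forall>j \<in> {1..n-2}. 0 \<le> fst (v j) \<and> snd (v j) \<le> 0)"

definition is_quiddity :: "nat \<Rightarrow> (nat \<Rightarrow> int \<times> int) \<Rightarrow> (nat \<Rightarrow> int) \<Rightarrow> bool" where
  "is_quiddity n v a \<longleftrightarrow>
     (\<forall>j \<in> {1..n}.
        a j * fst (v j) = fst (v (cyc_prev n j)) + fst (v (cyc_next n j)) \<and>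
        a j * snd (v j) = snd (v (cyc_prev n j)) + snd (v (cyc_next n j)))"

end

theory Submission
  imports Defs
begin

theorem lemma2p11:
  fixes n :: nat and v :: "nat \<Rightarrow> int \<times> int" and a :: "nat \<Rightarrow> int"
  assumes "cfan_sc_rays n v"
    and "is_quiddity n v a"
    and "5 \<le> n"
  shows "\<exists>i. 2 \<le> i \<and> i \<le> n - 3 \<and> a i = 1"
proof -
  define N where "N j = fst (v j) - snd (v j)" for j
  have v1: "v 1 = (1,0)" and vm: "v (n-2) = (0,-1)"
    and dt: "\<And>j. j \<in> {1..n} \<Longrightarrow> det2 (v j) (v (cyc_next n j)) = -1"
    and q: "\<And>j. j \<in> {1..n-2} \<Longrightarrow> 0 \<le> fst (v j) \<and> snd (v j) \<le> 0"
    using assms(1) unfolding cfan_sc_rays_def by auto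
  have qa: "\<And>j. j \<in> {1..n} \<Longrightarrow>
        a j * fst (v j) = fst (v (cyc_prev n j)) + fst (v (cyc_next n j)) \<and>
        a j * snd (v j) = snd (v (cyc_prev n j)) + snd (v (cyc_next n j))"
    using assms(2) unfolding is_quiddity_def by auto
  have det_succ: "det2 (v j) (v (j+1)) = -1" if "1 \<le> j" "j < n" for j
    using dt[of j] that by (simp add: cyc_next_def)
  have N1: "N 1 = 1" and Nm: "N (n-2) = 1" using v1 vm by (auto simp: N_def)
  have Nint: "N j \<ge> 2" if "2 \<le> j" "j \<le> n - 3" for j
  proof -
    have qj: "0 \<le> fst (v j)" "snd (v j) \<le> 0" using q[of j] that by auto
    have qp: "0 \<le> fst (v (j-1))" "snd (v (j-1)) \<le> 0" proof -
      have "j - 1 \<in> {1..n-2}" using that by auto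
      then show "0 \<le> fst (v (j-1))" "snd (v (j-1)) \<le> 0" using q by auto
    qed
    have qn: "0 \<le> fst (v (j+1))" "snd (v (j+1)) \<le> 0" using q[of "j+1"] that assms(3) by auto
    have d1: "det2 (v (j-1)) (v j) = -1" using det_succ[of "j-1"] that assms(3) by auto
    have d2: "det2 (v j) (v (j+1)) = -1" using det_succ[of "j"] that assms(3) by auto
    show ?thesis
    proof (rule ccontr)
      assume "\<not> ?thesis"
      then have "N j \<le> 1" by simp
      have "v j \<noteq> (0,0)" using d2 by (auto simp: det2_def)
      then have "v j = (1,0) \<or> v j = (0,-1)" using qj \<open>N j \<le> 1\<close> unfolding N_def
        by (cases "v j") auto
      then show False
      proof
        assume "v j = (1,0)" then show False using d1 qp by (auto simp: det2_def)
      next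
        assume "v j = (0,-1)" then show False using d2 qn by (auto simp: det2_def)
      qed
    qed
  qed
  define S where "S = {2..n-3}"
  have Sfin: "finite S" and Sne: "S \<noteq> {}" using assms(3) by (auto simp: S_def)
  define M where "M = Max (N ` S)"
  have "M \<in> N ` S" using Sfin Sne unfolding M_def by (intro Max_in) auto
  then obtain k where "k \<in> S" "N k = M" by auto
  then have ex: "\<exists>k. k \<in> S \<and> N k = M" by blast
  obtain i where i: "i \<in> S" "N i = M" and imin: "\<And>j. j \<in> S \<Longrightarrow> N j = M \<Longrightarrow> i \<le> j"
    using ex_has_least_nat[of "\<lambda>k. k \<in> S \<and> N k = M" k "\<lambda>k. k"] \<open>k \<in> S\<close> \<open>N k = M\<close> by auto
  have Mmax: "\<And>j. j \<in> S \<Longrightarrow> N j \<le> M" using Sfin unfolding M_def by auto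
  have i2: "2 \<le> i" "i \<le> n - 3" using i by (auto simp: S_def)
  have Ni: "N i \<ge> 2" using Nint i2 by auto
  have prev: "N (i-1) < N i"
  proof (cases "i = 2")
    case True then show ?thesis using N1 Ni by auto
  next
    case False
    then have "i - 1 \<in> S" using i2 by (auto simp: S_def)
    moreover have "N (i-1) \<noteq> M" using imin[of "i-1"] \<open>i - 1 \<in> S\<close> i2 False by fastforce
    ultimately show ?thesis using Mmax i by fastforce
  qed
  have next': "N (i+1) \<le> N i"
  proof (cases "i + 1 = n - 2")
    case True then show ?thesis using Nm Ni by auto
  next
    case False
    then have "i + 1 \<in> S" using i2 by (auto simp: S_def)
    then show ?thesis using Mmax i by auto
  qed
  have Np: "N (i-1) > 0" and Nn: "N (i+1) > 0"
  proof -
    show "N (i-1) > 0"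
    proof (cases "i = 2")
      case True then show ?thesis using N1 by auto
    next
      case False
      then have "2 \<le> i - 1" "i - 1 \<le> n - 3" using i2 by auto
      then show ?thesis using Nint[of "i-1"] by auto
    qed
    show "N (i+1) > 0"
    proof (cases "i + 1 = n - 2")
      case True then show ?thesis using Nm by auto
    next
      case False
      then have "2 \<le> i + 1" "i + 1 \<le> n - 3" using i2 by auto
      then show ?thesis using Nint[of "i+1"] by auto
    qed
  qed
  have qi: "a i * fst (v i) = fst (v (i-1)) + fst (v (i+1)) \<and>
            a i * snd (v i) = snd (v (i-1)) + snd (v (i+1))"
    using qa[of i] i2 assms(3) by (auto simp: cyc_prev_def cyc_next_def)
  have eq: "a i * N i = N (i-1) + N (i+1)"
    using qi unfolding N_def by (simp add: right_diff_distrib)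
  have "a i * N i < 2 * N i" using eq prev next' by linarith
  then have lt: "a i < 2" using Ni by (simp add: mult_less_cancel_right)
  have "a i * N i > 0" using eq Np Nn by linarith
  then have "a i > 0" using Ni by (simp add: zero_less_mult_iff)
  then have "a i = 1" using lt by linarith
  then show ?thesis using i2 by blast
qed

end
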